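(* Let $S$ be a group or a 0-group. Then a right $S$-act $A_S$ is Rees artinian if and only if it is Rees noetherian.
   Context: A 0-group is a group with an externally adjoined zero element. An $S$-act is Rees artinian (Rees noetherian) if its subacts satisfy the descending (ascending) chain condition. *)

theory Defs
  imports "HOL-Algebra.Group"
begin

definition zero_group :: "('a, 'b) monoid_scheme \<Rightarrow> bool" where
  "zero_group S \<longleftrightarrow>
     (\<forall>x \<in> carrier S. \<forall>y \<in> carrier S. x \<otimes>\<^bsub>S\<^esub> y \<in> carrier S) \<and>
     (\<forall>x \<in> carrier S. \<forall>y \<in> carrier S. \<forall>w \<in> carrier S.
        (x \<otimes>\<^bsub>S\<^esub> y) \<otimes>\<^bsub>S\<^esub> w = x \<otimes>\<^bsub>S\<^esub> (y \<otimes>\<^bsub>S\<^esub> w)) \<and>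
     (\<exists>z \<in> carrier S. (\<forall>x \<in> carrier S. z \<otimes>\<^bsub>S\<^esub> x = z \<and> x \<otimes>\<^bsub>S\<^esub> z = z)
        \<and> group (S\<lparr>carrier := carrier S - {z}\<rparr>))"

definition right_act :: "('a, 'b) monoid_scheme \<Rightarrow> 'c set \<Rightarrow> ('c \<Rightarrow> 'a \<Rightarrow> 'c) \<Rightarrow> bool" where
  "right_act S A act \<longleftrightarrow>
     (\<forall>a \<in> A. \<forall>s \<in> carrier S. act a s \<in> A) \<and>
     (\<forall>a \<in> A. \<forall>s \<in> carrier S. \<forall>t \<in> carrier S. act (act a s) t = act a (s \<otimes>\<^bsub>S\<^esub> t))"

definition subact :: "('a, 'b) monoid_scheme \<Rightarrow> 'c set \<Rightarrow> ('c \<Rightarrow> 'a \<Rightarrow> 'c) \<Rightarrow> 'c set \<Rightarrow> bool" where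
  "subact S A act B \<longleftrightarrow> B \<subseteq> A \<and> B \<noteq> {} \<and> (\<forall>b \<in> B. \<forall>s \<in> carrier S. act b s \<in> B)"

definition rees_artinian :: "('a, 'b) monoid_scheme \<Rightarrow> 'c set \<Rightarrow> ('c \<Rightarrow> 'a \<Rightarrow> 'c) \<Rightarrow> bool" where
  "rees_artinian S A act \<longleftrightarrow>
     (\<forall>f :: nat \<Rightarrow> 'c set. (\<forall>n. subact S A act (f n)) \<and> (\<forall>n. f (Suc n) \<subseteq> f n)
        \<longrightarrow> (\<exists>N. \<forall>n \<ge> N. f n = f N))"

definition rees_noetherian :: "('a, 'b) monoid_scheme \<Rightarrow> 'c set \<Rightarrow> ('c \<Rightarrow> 'a \<Rightarrow> 'c) \<Rightarrow> bool" where
  "rees_noetherian S A act \<longleftrightarrow>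
     (\<forall>f :: nat \<Rightarrow> 'c set. (\<forall>n. subact S A act (f n)) \<and> (\<forall>n. f n \<subseteq> f (Suc n))
        \<longrightarrow> (\<exists>N. \<forall>n \<ge> N. f n = f N))"

end

theory Submission
  imports Defs
begin

lemma mono_fin_stab:
  fixes f :: "nat \<Rightarrow> 'c set"
  assumes fin: "finite F" and inF: "\<And>n. f n \<in> F"
    and mono: "\<And>n m. n \<le> m \<Longrightarrow> f n \<subseteq> f m \<or> f m \<subseteq> f n"
    and dir: "(\<forall>n m. n \<le> m \<longrightarrow> f n \<subseteq> f m) \<or> (\<forall>n m. n \<le> m \<longrightarrow> f m \<subseteq> f n)"
  shows "\<exists>N. \<forall>n\<ge>N. f n = f N"
proof -
  have "finite (f ` UNIV)" using fin inF by (metis finite_subset image_subsetI)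
  then obtain N where N: "infinite {a. f a = f N}"
    using pigeonhole_infinite[of "UNIV::nat set" f] by auto
  have "\<forall>n\<ge>N. f n = f N"
  proof (intro allI impI)
    fix n assume "N \<le> n"
    obtain m where m: "m \<ge> n" "f m = f N" using N unfolding finite_nat_set_iff_bounded_le by (metis (mono_tags, lifting) mem_Collect_eq nat_le_linear)
    show "f n = f N" using dir \<open>N \<le> n\<close> m by (metis subset_antisym)
  qed
  thus ?thesis by blast
qed

definition dset :: "'c set \<Rightarrow> ('c \<Rightarrow> 'c \<Rightarrow> bool) \<Rightarrow> 'c set \<Rightarrow> bool" where
  "dset A rl B \<longleftrightarrow> B \<subseteq> A \<and> B \<noteq> {} \<and> (\<forall>y\<in>B. \<forall>x\<in>A. rl x y \<longrightarrow> x \<in> B)"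

definition DCC where
  "DCC A rl \<longleftrightarrow> (\<forall>f :: nat \<Rightarrow> _ set. (\<forall>n. dset A rl (f n)) \<and> (\<forall>n. f (Suc n) \<subseteq> f n)
        \<longrightarrow> (\<exists>N. \<forall>n \<ge> N. f n = f N))"
definition ACC where
  "ACC A rl \<longleftrightarrow> (\<forall>f :: nat \<Rightarrow> _ set. (\<forall>n. dset A rl (f n)) \<and> (\<forall>n. f n \<subseteq> f (Suc n))
        \<longrightarrow> (\<exists>N. \<forall>n \<ge> N. f n = f N))"

lemma generic:
  fixes A :: "'c set" and rl :: "'c \<Rightarrow> 'c \<Rightarrow> bool" and lev :: "'c \<Rightarrow> nat"
  assumes refl: "\<And>x. x \<in> A \<Longrightarrow> rl x x"
    and trans: "\<And>x y w. x \<in> A \<Longrightarrow> y \<in> A \<Longrightarrow> w \<in> A \<Longrightarrow> rl x y \<Longrightarrow> rl y w \<Longrightarrow> rl x w"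
    and fin: "finite (lev ` A)"
    and sym: "\<And>x y. x \<in> A \<Longrightarrow> y \<in> A \<Longrightarrow> rl x y \<Longrightarrow> lev x = lev y \<Longrightarrow> rl y x"
  shows "(DCC A rl \<and> ACC A rl) \<or> (\<not> DCC A rl \<and> \<not> ACC A rl)"
proof -
  define cls where "cls x = {y\<in>A. rl x y \<and> rl y x}" for x
  show ?thesis
  proof (cases "finite (cls ` A)")
    case True
    have sub: "{B. dset A rl B} \<subseteq> Union ` Pow (cls ` A)"
    proof
      fix B assume "B \<in> {B. dset A rl B}"
      hence B: "dset A rl B" by simp
      have "B = \<Union> (cls ` B)"
        using B refl unfolding dset_def cls_def by blast
      moreover have "cls ` B \<in> Pow (cls ` A)" using B unfolding dset_def by auto
      ultimately show "B \<in> Union ` Pow (cls ` A)" by blast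
    qed
    have finD: "finite {B. dset A rl B}"
      using finite_subset[OF sub] True by blast
    have "DCC A rl" unfolding DCC_def
    proof (intro allI impI)
      fix f :: "nat \<Rightarrow> 'c set" assume h: "(\<forall>n. dset A rl (f n)) \<and> (\<forall>n. f (Suc n) \<subseteq> f n)"
      hence d: "\<forall>n m. n \<le> m \<longrightarrow> f m \<subseteq> f n" using lift_Suc_antimono_le[of f] by blast
      show "\<exists>N. \<forall>n \<ge> N. f n = f N"
        by (rule mono_fin_stab[OF finD]) (use h d in auto)
    qed
    moreover have "ACC A rl" unfolding ACC_def
    proof (intro allI impI)
      fix f :: "nat \<Rightarrow> 'c set" assume h: "(\<forall>n. dset A rl (f n)) \<and> (\<forall>n. f n \<subseteq> f (Suc n))"
      hence d: "\<forall>n m. n \<le> m \<longrightarrow> f n \<subseteq> f m" using lift_Suc_mono_le[of f] by blast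
      show "\<exists>N. \<forall>n \<ge> N. f n = f N"
        by (rule mono_fin_stab[OF finD]) (use h d in auto)
    qed
    ultimately show ?thesis by blast
  next
    case False
    have "cls ` A = (\<Union>k\<in>lev ` A. cls ` {x\<in>A. lev x = k})" by auto
    have "\<exists>k. infinite (cls ` {x\<in>A. lev x = k})"
    proof (rule ccontr)
      assume "\<nexists>k. infinite (cls ` {x\<in>A. lev x = k})"
      hence "finite (\<Union>k\<in>lev ` A. cls ` {x\<in>A. lev x = k})" using fin by blast
      thus False using False \<open>cls ` A = _\<close> by simp
    qed
    then obtain k where k: "infinite (cls ` {x\<in>A. lev x = k})" by blast
    then obtain c :: "nat \<Rightarrow> 'c set" where c: "inj c" "range c \<subseteq> cls ` {x\<in>A. lev x = k}"
      using infinite_countable_subset by blast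
    have "\<forall>i. \<exists>x. x \<in> A \<and> lev x = k \<and> c i = cls x" using c(2) by blast
    then obtain a where a: "\<And>i. a i \<in> A" "\<And>i. lev (a i) = k" "\<And>i. c i = cls (a i)" by metis
    have inc: "\<not> rl (a i) (a j)" if "i \<noteq> j" for i j
    proof
      assume l: "rl (a i) (a j)"
      hence l2: "rl (a j) (a i)" using sym a by metis
      have "cls (a i) = cls (a j)" unfolding cls_def using l l2 trans a(1) by blast
      hence "c i = c j" using a(3) by simp
      thus False using c(1) that by (meson injD)
    qed
    define up where "up n = {x\<in>A. \<exists>i\<le>n. rl x (a i)}" for n
    define dn where "dn n = {x\<in>A. \<exists>i\<ge>n. rl x (a i)}" for n
    have "dset A rl (up n)" for n
      unfolding dset_def up_def using refl a(1) trans by blast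
    moreover have "up n \<subseteq> up (Suc n)" for n unfolding up_def using le_SucI by blast
    moreover have "up (Suc N) \<noteq> up N" for N
    proof -
      have "a (Suc N) \<in> up (Suc N)" unfolding up_def using refl a(1) by blast
      moreover have "a (Suc N) \<notin> up N" unfolding up_def using inc by fastforce
      ultimately show ?thesis by blast
    qed
    ultimately have h: "\<And>n. dset A rl (up n)" "\<And>n. up n \<subseteq> up (Suc n)" "\<And>N. up (Suc N) \<noteq> up N" by blast+
    have nA: "\<not> ACC A rl" unfolding ACC_def
    proof
      assume "\<forall>f. (\<forall>n. dset A rl (f n)) \<and> (\<forall>n. f n \<subseteq> f (Suc n)) \<longrightarrow> (\<exists>N. \<forall>n\<ge>N. f n = f N)"
      hence "(\<forall>n. dset A rl (up n)) \<and> (\<forall>n. up n \<subseteq> up (Suc n)) \<longrightarrow> (\<exists>N. \<forall>n\<ge>N. up n = up N)" by (rule spec)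
      moreover have "(\<forall>n. dset A rl (up n))" using h(1) by simp
      moreover have "\<forall>n. up (Suc n) \<subseteq> up n \<or> up n \<subseteq> up (Suc n)" using h(2) by simp
      ultimately have "\<exists>N. \<forall>n\<ge>N. up n = up N" using h(2) by simp
      then obtain N where "\<forall>n\<ge>N. up n = up N" by (rule exE)
      hence "up (Suc N) = up N" using le_SucI[OF order_refl, of N] by blast
      thus False using h(3) by blast
    qed
    have "dset A rl (dn n)" for n
      unfolding dset_def dn_def using refl a(1) trans by blast
    moreover have "dn (Suc n) \<subseteq> dn n" for n unfolding dn_def using Suc_leD by blast
    moreover have "dn (Suc N) \<noteq> dn N" for N
    proof -
      have "a N \<in> dn N" unfolding dn_def using refl a(1) by blast
      moreover have "a N \<notin> dn (Suc N)" unfolding dn_def using inc by fastforce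
      ultimately show ?thesis by blast
    qed
    ultimately have h: "\<And>n. dset A rl (dn n)" "\<And>n. dn (Suc n) \<subseteq> dn n" "\<And>N. dn (Suc N) \<noteq> dn N" by blast+
    have nD: "\<not> DCC A rl" unfolding DCC_def
    proof
      assume "\<forall>f. (\<forall>n. dset A rl (f n)) \<and> (\<forall>n. f (Suc n) \<subseteq> f n) \<longrightarrow> (\<exists>N. \<forall>n\<ge>N. f n = f N)"
      hence "(\<forall>n. dset A rl (dn n)) \<and> (\<forall>n. dn (Suc n) \<subseteq> dn n) \<longrightarrow> (\<exists>N. \<forall>n\<ge>N. dn n = dn N)" by (rule spec)
      moreover have "(\<forall>n. dset A rl (dn n))" using h(1) by simp
      moreover have "\<forall>n. dn (Suc n) \<subseteq> dn n \<or> dn n \<subseteq> dn (Suc n)" using h(2) by simp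
      ultimately have "\<exists>N. \<forall>n\<ge>N. dn n = dn N" using h(2) by simp
      then obtain N where "\<forall>n\<ge>N. dn n = dn N" by (rule exE)
      hence "dn (Suc N) = dn N" using le_SucI[OF order_refl, of N] by blast
      thus False using h(3) by blast
    qed
    show ?thesis using nA nD by blast
  qed
qed

theorem mainTheorem15:
  fixes S :: "('a, 'b) monoid_scheme" and A :: "'c set" and act :: "'c \<Rightarrow> 'a \<Rightarrow> 'c"
  assumes "group S \<or> zero_group S"
    and "right_act S A act"
  shows "rees_artinian S A act \<longleftrightarrow> rees_noetherian S A act"
proof -
  let ?C = "carrier S"
  have ra: "\<And>a s. a \<in> A \<Longrightarrow> s \<in> ?C \<Longrightarrow> act a s \<in> A"
    and rc: "\<And>a s t. a \<in> A \<Longrightarrow> s \<in> ?C \<Longrightarrow> t \<in> ?C \<Longrightarrow> act (act a s) t = act a (s \<otimes>\<^bsub>S\<^esub> t)"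
    using assms(2) unfolding right_act_def by auto
  obtain Zs where Zs: "Zs \<subseteq> ?C"
    and cl: "\<And>s t. s \<in> ?C \<Longrightarrow> t \<in> ?C \<Longrightarrow> s \<otimes>\<^bsub>S\<^esub> t \<in> ?C"
    and one: "\<one>\<^bsub>S\<^esub> \<in> ?C"
    and ro: "\<And>s. s \<in> ?C \<Longrightarrow> s \<otimes>\<^bsub>S\<^esub> \<one>\<^bsub>S\<^esub> = s"
    and iv: "\<And>s. s \<in> ?C - Zs \<Longrightarrow> \<exists>s'\<in>?C. s \<otimes>\<^bsub>S\<^esub> s' = \<one>\<^bsub>S\<^esub>"
    and zz: "\<And>w t. w \<in> Zs \<Longrightarrow> t \<in> ?C \<Longrightarrow> w \<otimes>\<^bsub>S\<^esub> t = w"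
  proof -
    { assume g: "group S"
      have ?thesis
      proof (rule that[of "{}"])
        show "\<And>s. s \<in> ?C - {} \<Longrightarrow> \<exists>s'\<in>?C. s \<otimes>\<^bsub>S\<^esub> s' = \<one>\<^bsub>S\<^esub>"
          using group.r_inv[OF g] group.inv_closed[OF g] by blast
      next
        show "\<And>s t. s \<in> ?C \<Longrightarrow> t \<in> ?C \<Longrightarrow> s \<otimes>\<^bsub>S\<^esub> t \<in> ?C"
          by (rule monoid.m_closed[OF group.is_monoid[OF g]])
      next
        show "\<one>\<^bsub>S\<^esub> \<in> ?C" by (rule monoid.one_closed[OF group.is_monoid[OF g]])
      next
        show "\<And>s. s \<in> ?C \<Longrightarrow> s \<otimes>\<^bsub>S\<^esub> \<one>\<^bsub>S\<^esub> = s"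
          by (rule monoid.r_one[OF group.is_monoid[OF g]])
      qed auto }
    moreover
    { assume zg: "zero_group S"
      then obtain z where z: "z \<in> ?C" "\<And>x. x \<in> ?C \<Longrightarrow> z \<otimes>\<^bsub>S\<^esub> x = z \<and> x \<otimes>\<^bsub>S\<^esub> z = z"
        and G: "group (S\<lparr>carrier := ?C - {z}\<rparr>)" and clo: "\<And>x y. x \<in> ?C \<Longrightarrow> y \<in> ?C \<Longrightarrow> x \<otimes>\<^bsub>S\<^esub> y \<in> ?C"
        unfolding zero_group_def by blast
      let ?G = "S\<lparr>carrier := ?C - {z}\<rparr>"
      have o1: "\<one>\<^bsub>S\<^esub> \<in> ?C - {z}" using group.is_monoid[OF G] monoid.one_closed by fastforce
      have r1: "s \<otimes>\<^bsub>S\<^esub> \<one>\<^bsub>S\<^esub> = s" if "s \<in> ?C" for s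
      proof (cases "s = z")
        case True thus ?thesis using z o1 by blast
      next
        case False thus ?thesis using that group.is_monoid[OF G] monoid.r_one by fastforce
      qed
      have i1: "\<exists>s'\<in>?C. s \<otimes>\<^bsub>S\<^esub> s' = \<one>\<^bsub>S\<^esub>" if "s \<in> ?C - {z}" for s
        using group.r_inv[OF G, of s] group.inv_closed[OF G, of s] that by fastforce
      have ?thesis
        apply (rule that[of "{z}"])
        using z o1 r1 i1 clo by auto }
    ultimately show ?thesis by (rule disjE[OF assms(1)])
  qed
  define rl where "rl x y \<longleftrightarrow> x = y \<or> (\<exists>s\<in>?C. x = act y s)" for x y
  define lev where "lev x = (if act x \<one>\<^bsub>S\<^esub> \<noteq> x then 2 else if (\<forall>s\<in>?C. act x s = x) then 0 else (1::nat))" for x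
  have eqv: "subact S A act B \<longleftrightarrow> dset A rl B" for B
    unfolding subact_def dset_def rl_def using ra by blast
  have refl: "\<And>x. x \<in> A \<Longrightarrow> rl x x" unfolding rl_def by simp
  have trans: "\<And>x y w. x \<in> A \<Longrightarrow> y \<in> A \<Longrightarrow> w \<in> A \<Longrightarrow> rl x y \<Longrightarrow> rl y w \<Longrightarrow> rl x w"
    unfolding rl_def using rc cl by metis
  have fin: "finite (lev ` A)"
    by (rule finite_subset[of _ "{0,1,2}"]) (auto simp: lev_def)
  have sym: "\<And>x y. x \<in> A \<Longrightarrow> y \<in> A \<Longrightarrow> rl x y \<Longrightarrow> lev x = lev y \<Longrightarrow> rl y x"
  proof -
    fix x y assume xA: "x \<in> A" and yA: "y \<in> A" and l: "rl x y" and lv: "lev x = lev y"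
    show "rl y x"
    proof (cases "x = y")
      case True thus ?thesis by (simp add: rl_def)
    next
      case False
      then obtain s where s: "s \<in> ?C" "x = act y s" using l rl_def by blast
      have x1: "act x \<one>\<^bsub>S\<^esub> = x" using s rc[OF yA s(1) one] ro by simp
      hence "lev x \<noteq> 2" by (simp add: lev_def)
      have y1: "act y \<one>\<^bsub>S\<^esub> = y"
      proof (rule ccontr)
        assume "act y \<one>\<^bsub>S\<^esub> \<noteq> y"
        hence "lev y = 2" by (simp add: lev_def)
        thus False using lv \<open>lev x \<noteq> 2\<close> by simp
      qed
      have ynf: "\<not> (\<forall>t\<in>?C. act y t = y)" using s False by metis
      hence "lev y = 1" using y1 by (simp add: lev_def)
      have xnf: "\<not> (\<forall>t\<in>?C. act x t = x)"
      proof
        assume "\<forall>t\<in>?C. act x t = x"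
        hence "lev x = 0" using x1 by (simp add: lev_def)
        thus False using lv \<open>lev y = 1\<close> by simp
      qed
      have "s \<notin> Zs"
      proof
        assume "s \<in> Zs"
        hence "\<forall>t\<in>?C. act x t = x" using s rc[OF yA s(1)] zz by simp
        thus False using xnf by blast
      qed
      then obtain s' where s': "s' \<in> ?C" "s \<otimes>\<^bsub>S\<^esub> s' = \<one>\<^bsub>S\<^esub>" using iv s(1) by blast
      have "act x s' = y" using s s' rc[OF yA s(1) s'(1)] y1 by simp
      thus ?thesis using s'(1) rl_def by metis
    qed
  qed
  have g: "(DCC A rl \<and> ACC A rl) \<or> (\<not> DCC A rl \<and> \<not> ACC A rl)"
    by (rule generic[OF refl trans fin sym]) auto
  have "rees_artinian S A act = DCC A rl" unfolding rees_artinian_def DCC_def eqv ..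
  moreover have "rees_noetherian S A act = ACC A rl" unfolding rees_noetherian_def ACC_def eqv ..
  ultimately show ?thesis using g by blast
qed

end
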